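(* Let $l>0$ and $g>0$, and for real parameters $\Lambda_1,\Lambda_2$ let $\bar U(\theta)=\Lambda_1\cos 2\theta+\Lambda_2\sin 2\theta-gl\cos\theta$ with $l=1$, $g=1$, i.e. $\bar U(\theta)=\Lambda_1\cos 2\theta+\Lambda_2\sin 2\theta-\cos\theta$. Then $\bar U$ has a degenerate critical point, i.e. there exists $\theta\in\mathbb{R}$ with $\bar U'(\theta)=0$ and $\bar U''(\theta)=0$, if and only if $(\Lambda_1,\Lambda_2)$ lies on the curve $$\Gamma_1=\left\{\left(\tfrac{\cos^3\theta}{2}-\tfrac{3\cos\theta}{4},\ \tfrac{\sin^3\theta}{2}\right):\ \theta\in\mathbb{R}\right\}.$$
   Context: $\bar U$ is the effective potential of the averaged Hamiltonian $\bar H(\theta,p)=\frac{p^2}{2l^2}+\bar U(\theta)$ of a pendulum (rod length $l$, unit mass, gravity $g$) whose suspension point is subjected to small stochastic vibrations; here $l=g=1$. The parameters $\Lambda_1,\Lambda_2$ are arbitrary real numbers. *)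

theory Defs
  imports "HOL-Analysis.Analysis"
begin

definition Ubar :: "real \<Rightarrow> real \<Rightarrow> real \<Rightarrow> real" where
  "Ubar L1 L2 \<theta> = L1 * cos (2 * \<theta>) + L2 * sin (2 * \<theta>) - cos \<theta>"

definition Gamma1 :: "(real \<times> real) set" where
  "Gamma1 = {(cos t ^ 3 / 2 - 3 * cos t / 4, sin t ^ 3 / 2) | t. True}"

end

theory Submission
  imports Defs
begin

lemma d1: "deriv (Ubar L1 L2) = (\<lambda>x. - 2 * L1 * sin(2 * x) + 2 * L2 * cos(2 * x) + sin x)"
proof
  fix x
  show "deriv (Ubar L1 L2) x = - 2 * L1 * sin(2 * x) + 2 * L2 * cos(2 * x) + sin x"
    unfolding Ubar_def
    by (rule DERIV_imp_deriv) (auto intro!: derivative_eq_intros simp: algebra_simps)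
qed

lemma d2: "deriv (deriv (Ubar L1 L2)) = (\<lambda>x. - 4 * L1 * cos(2 * x) - 4 * L2 * sin(2 * x) + cos x)"
proof
  fix x
  show "deriv (deriv (Ubar L1 L2)) x = - 4 * L1 * cos(2 * x) - 4 * L2 * sin(2 * x) + cos x"
    unfolding d1
    by (rule DERIV_imp_deriv) (auto intro!: derivative_eq_intros simp: algebra_simps)
qed

lemma a2: "(C ^ 2 - S ^ 2) * C / 4 + (2 * S * C) * S / 2 = - (C ^ 3 / 2) + 3 * C / 4 + (3 * C / 4) * (S ^ 2 + C ^ 2 - 1)" for C S :: real
  by (simp add: field_simps power2_eq_square power3_eq_cube)
lemma a3: "(2 * S * C) * C / 4 - (C ^ 2 - S ^ 2) * S / 2 = S ^ 3 / 2" for C S :: real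
  by (simp add: field_simps power2_eq_square power3_eq_cube)

lemma fwd:
  fixes L1 L2 C S c s :: real
  assumes e1: "- 2 * L1 * s + 2 * L2 * c + S = 0" and e2: "- 4 * L1 * c - 4 * L2 * s + C = 0"
    and p: "S ^ 2 + C ^ 2 = 1" and s2: "s = 2 * S * C" and c2: "c = C ^ 2 - S ^ 2"
  shows "L1 = - (C ^ 3 / 2) + 3 * C / 4 \<and> L2 = S ^ 3 / 2"
proof -
  have q0: "c ^ 2 + s ^ 2 = (S ^ 2 + C ^ 2) ^ 2" unfolding s2 c2 by algebra
  have q: "c ^ 2 + s ^ 2 = 1" using q0 p by simp
  have A: "L1 * c + L2 * s = C / 4" using e2 by linarith
  have B: "L1 * s - L2 * c = S / 2" using e1 by linarith
  have u: "S ^ 2 + C ^ 2 - 1 = 0" using p by simp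
  have i1: "c * (L1 * c + L2 * s) + s * (L1 * s - L2 * c) = L1 * (c ^ 2 + s ^ 2)" by algebra
  have i2: "s * (L1 * c + L2 * s) - c * (L1 * s - L2 * c) = L2 * (c ^ 2 + s ^ 2)" by algebra
  have "L1 = c * (C / 4) + s * (S / 2)" using i1 unfolding q A B by simp
  also have "\<dots> = (C ^ 2 - S ^ 2) * C / 4 + (2 * S * C) * S / 2" unfolding s2 c2 by simp
  also have "\<dots> = - (C ^ 3 / 2) + 3 * C / 4" unfolding a2 u by simp
  finally have r1: "L1 = - (C ^ 3 / 2) + 3 * C / 4" .
  have "L2 = s * (C / 4) - c * (S / 2)" using i2 unfolding q A B by simp
  also have "\<dots> = (2 * S * C) * C / 4 - (C ^ 2 - S ^ 2) * S / 2" unfolding s2 c2 by simp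
  also have "\<dots> = S ^ 3 / 2" by (rule a3)
  finally show ?thesis using r1 by simp
qed

lemma bwd:
  fixes C S c s L1 L2 :: real
  assumes p: "S ^ 2 + C ^ 2 = 1" and h1: "L1 = - (C ^ 3 / 2) + 3 * C / 4" and h2: "L2 = S ^ 3 / 2"
    and s2: "s = 2 * S * C" and c2: "c = C ^ 2 - S ^ 2"
  shows "- 2 * L1 * s + 2 * L2 * c + S = 0"
    and "- 4 * L1 * c - 4 * L2 * s + C = 0"
proof -
  have u: "S ^ 2 + C ^ 2 - 1 = 0" using p by simp
  have "- 2 * L1 * s + 2 * L2 * c + S
     = S * (S ^ 2 + C ^ 2 - 1) * (2 * C ^ 2 - S ^ 2 - 1)" unfolding h1 h2 s2 c2 by (simp add: field_simps power2_eq_square power3_eq_cube)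
  then show "- 2 * L1 * s + 2 * L2 * c + S = 0" by (simp only: u mult_zero_left mult_zero_right)
  have "- 4 * L1 * c - 4 * L2 * s + C
     = C * (S ^ 2 + C ^ 2 - 1) * (2 * C ^ 2 - 4 * S ^ 2 - 1)" unfolding h1 h2 s2 c2 by (simp add: field_simps power2_eq_square power3_eq_cube)
  then show "- 4 * L1 * c - 4 * L2 * s + C = 0" by (simp only: u mult_zero_left mult_zero_right)
qed

theorem mainTheorem1:
  fixes L1 L2 :: real
  shows "(\<exists>\<theta>::real. deriv (Ubar L1 L2) \<theta> = 0 \<and> deriv (deriv (Ubar L1 L2)) \<theta> = 0)
         \<longleftrightarrow> (L1, L2) \<in> Gamma1"
proof
  assume "\<exists>\<theta>::real. deriv (Ubar L1 L2) \<theta> = 0 \<and> deriv (deriv (Ubar L1 L2)) \<theta> = 0"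
  then obtain x where x1: "deriv (Ubar L1 L2) x = 0" and x2: "deriv (deriv (Ubar L1 L2)) x = 0"
    by blast
  have e: "- 2 * L1 * sin(2 * x) + 2 * L2 * cos(2 * x) + sin x = 0"
    "- 4 * L1 * cos(2 * x) - 4 * L2 * sin(2 * x) + cos x = 0"
    using x1[unfolded d1] x2[unfolded d2] by simp_all
  have p: "sin x ^ 2 + cos x ^ 2 = 1" by simp
  have s2: "sin (2 * x) = 2  *  sin x  *  cos x" by (rule sin_double)
  have c2: "cos (2 * x) = cos x ^ 2 - sin x ^ 2" by (rule cos_double)
  have "L1 = - (cos x ^ 3 / 2) + 3  *  cos x / 4" "L2 = sin x ^ 3 / 2"
    using fwd[OF e(1) e(2) p s2 c2] by auto
  then have "(L1, L2) = (cos (pi - x) ^ 3 / 2 - 3  *  cos (pi - x) / 4, sin (pi - x) ^ 3 / 2)"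
    by simp
  then show "(L1, L2) \<in> Gamma1" unfolding Gamma1_def mem_Collect_eq
    by (intro exI[of _ "pi - x"]) simp
next
  assume "(L1, L2) \<in> Gamma1"
  then obtain t where L: "L1 = cos t ^ 3 / 2 - 3  *  cos t / 4" "L2 = sin t ^ 3 / 2"
    unfolding Gamma1_def by auto
  define x where "x = pi - t"
  have cx: "cos t = - cos x" and sx: "sin t = sin x" unfolding x_def by simp_all
  have p: "sin x ^ 2 + cos x ^ 2 = 1" by simp
  have s2: "sin (2 * x) = 2  *  sin x  *  cos x" by (rule sin_double)
  have c2: "cos (2 * x) = cos x ^ 2 - sin x ^ 2" by (rule cos_double)
  have h1: "L1 = - (cos x ^ 3 / 2) + 3 * cos x / 4" using L(1) unfolding cx by simp
  have h2: "L2 = sin x ^ 3 / 2" using L(2) unfolding sx .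
  have y1: "- 2 * L1 * sin(2 * x) + 2 * L2 * cos(2 * x) + sin x = 0"
    by (rule bwd(1)[OF p h1 h2 s2 c2])
  have y2: "- 4 * L1 * cos(2 * x) - 4 * L2 * sin(2 * x) + cos x = 0"
    by (rule bwd(2)[OF p h1 h2 s2 c2])
  have z1: "deriv (Ubar L1 L2) x = 0" unfolding d1 using y1 by simp
  have z2: "deriv (deriv (Ubar L1 L2)) x = 0" unfolding d2 using y2 by simp
  show "\<exists>\<theta>::real. deriv (Ubar L1 L2) \<theta> = 0 \<and> deriv (deriv (Ubar L1 L2)) \<theta> = 0"
    using z1 z2 by blast
qed

end
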